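(* Let $V,K,L$ be positive integers, $\boldsymbol\epsilon\in[0,1]^V$, and let $V_1,\dots,V_L$ be pairwise disjoint finite sets of rays (ray $j$ "belongs to position $l$" if $j\in V_l$), each with $|V_l|\ge K$; each ray $j$ has a vector $\mathbf p_j=(p_{ij})_{i=1}^V\in[0,1]^V$. Run the multi-position greedy algorithm: $\mathbf b^0=\boldsymbol\epsilon$, $A_0=V_1\cup\dots\cup V_L$, $J_l=\emptyset$ for all $l$; at iteration $t=1,2,\dots$ (while $A_{t-1}\neq\emptyset$) choose $j_t\in\arg\min_{j\in A_{t-1}}\sum_i b^{t-1}_i p_{ij}$, let $l_t$ be its position, add $j_t$ to $J_{l_t}$, set $\mathbf b^t=\mathbf b^{t-1}\odot\mathbf p_{j_t}$, and set $A_t=A_{t-1}\setminus\{j_t\}$, except that if $|J_{l_t}|=K$ then $A_t=A_{t-1}\setminus V_{l_t}$ (position $l_t$ is closed). This runs exactly $LK$ iterations. Let $f^t=\sum_i b_i^t$ and $E=\sum_i\epsilon_i$. Suppose real numbers $\overline{\mathrm{OPT}}_0\le\overline{\mathrm{OPT}}_1\le\dots\le\overline{\mathrm{OPT}}_{L-1}$ are such that for every $t\in\{0,\dots,LK-1\}$ the set $A_t$ contains a nonempty subset $S$ with $|S|\le LK$ and $\sum_{i=1}^V\prod_{j\in S}p_{ij}\le \overline{\mathrm{OPT}}_{\lfloor t/K\rfloor}$. Then $$f^{LK}\le \frac{E}{e}+\sum_{u=0}^{L-1}\gamma_u\,\overline{\mathrm{OPT}}_u,\qquad \gamma_u=\B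ig(1-e^{-1/L}\Big)\Big(e^{-1/L}\Big)^{L-1-u}.$$
   Context: $\odot$ denotes coordinatewise product; $e$ is Euler's number. The quantity $\overline{\mathrm{OPT}}_u$ plays the role of the optimum cost still achievable with available rays after $u$ positions have been closed; at most $\lfloor t/K\rfloor$ positions are closed after $t$ iterations. *)

theory Defs
  imports Complex_Main
begin

text \<open>Coordinates are indexed by i < nV (i.e. 0..nV-1 instead of 1..V); positions by l < L.
  Iteration t+1 of the paper (t = 0,1,...) chooses jj t (= j_{t+1}) with position ll t (= l_{t+1}).
  b t, A t, J t are b^t, A_t and (J_l)_l after t iterations.\<close>

definition greedy_run ::
  "nat \<Rightarrow> nat \<Rightarrow> nat \<Rightarrow> (nat \<Rightarrow> real) \<Rightarrow> (nat \<Rightarrow> 'r set) \<Rightarrow> ('r \<Rightarrow> nat \<Rightarrow> real)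
   \<Rightarrow> (nat \<Rightarrow> 'r) \<Rightarrow> (nat \<Rightarrow> nat) \<Rightarrow> (nat \<Rightarrow> nat \<Rightarrow> real) \<Rightarrow> (nat \<Rightarrow> 'r set)
   \<Rightarrow> (nat \<Rightarrow> nat \<Rightarrow> 'r set) \<Rightarrow> bool" where
  "greedy_run nV K L eps Vs p jj ll b A J \<longleftrightarrow>
     b 0 = eps \<and> A 0 = (\<Union>l<L. Vs l) \<and> (\<forall>l. J 0 l = {}) \<and>
     (\<forall>t < L * K.
        jj t \<in> A t \<and>
        (\<forall>j \<in> A t. (\<Sum>i<nV. b t i * p (jj t) i) \<le> (\<Sum>i<nV. b t i * p j i)) \<and>
        ll t < L \<and> jj t \<in> Vs (ll t) \<and>
        J (Suc t) = (J t)(ll t := insert (jj t) (J t (ll t))) \<and>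
        b (Suc t) = (\<lambda>i. b t i * p (jj t) i) \<and>
        A (Suc t) = (if card (J (Suc t) (ll t)) = K then A t - Vs (ll t) else A t - {jj t}))"

definition gamma_coef :: "nat \<Rightarrow> nat \<Rightarrow> real" where
  "gamma_coef L u = (1 - exp (- 1 / real L)) * (exp (- 1 / real L)) ^ (L - 1 - u)"

end

theory Submission
  imports Defs
begin

lemma prod_union_bound:
  fixes q :: "'a \<Rightarrow> real"
  assumes "finite S" "\<forall>j\<in>S. 0 \<le> q j \<and> q j \<le> 1"
  shows "0 \<le> prod q S \<and> prod q S \<le> 1 \<and> 1 - prod q S \<le> (\<Sum>j\<in>S. 1 - q j)"
  using assms
proof (induction S rule: finite_induct)
  case empty then show ?case by simp
next
  case (insert x F)
  then have x: "0 \<le> q x" "q x \<le> 1" and IH: "0 \<le> prod q F" "prod q F \<le> 1" "1 - prod q F \<le> (\<Sum>j\<in>F. 1 - q j)"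
    by auto
  have "1 - q x * prod q F \<le> (1 - q x) + (1 - prod q F)"
  proof -
    have "0 \<le> (1 - q x) * (1 - prod q F)" using x IH by simp
    then show ?thesis by (simp add: algebra_simps)
  qed
  then show ?case using insert x IH by (auto intro: mult_le_one)
qed

lemma step_core:
  fixes f g h Ob m n a :: real
  assumes "1 \<le> m" "m \<le> n" "f - g \<le> m * (f - h)" "g \<le> Ob" "h \<le> f" "1 - 1/n \<le> a" "a \<le> 1"
  shows "h \<le> a * f + (1 - a) * Ob"
proof (cases "f \<le> Ob")
  case True
  then have "h \<le> f" using assms by simp
  also have "f \<le> a * f + (1 - a) * Ob"
  proof -
    have "0 \<le> (1 - a) * (Ob - f)" using True assms(7) by simp
    then show ?thesis by (simp add: algebra_simps)
  qed
  finally show ?thesis .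
next
  case False
  have n0: "n > 0" using assms by linarith
  have "f - h \<ge> (f - g) / m" using assms by (simp add: divide_le_eq mult.commute)
  moreover have "(f - g) / m \<ge> (f - Ob) / n"
  proof -
    have "(f - Ob)/n \<le> (f - g)/n" using assms n0 by (simp add: divide_right_mono)
    also have "\<dots> \<le> (f - g)/m" using assms False by (intro divide_left_mono) auto
    finally show ?thesis .
  qed
  ultimately have "h \<le> (1 - 1/n) * f + (1/n) * Ob" by (simp add: algebra_simps diff_divide_distrib)
  also have "\<dots> \<le> a * f + (1 - a) * Ob"
  proof -
    have "(a - (1 - 1/n)) * (f - Ob) \<ge> 0" using assms False by auto
    then show ?thesis by (simp add: algebra_simps diff_divide_distrib)
  qed
  finally show ?thesis .
qed

lemma geom_rec:
  fixes y Ob :: "nat \<Rightarrow> real" and c :: real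
  assumes "c \<ge> 0" "\<forall>u<N. y (Suc u) \<le> c * y u + (1 - c) * Ob u"
  shows "u \<le> N \<Longrightarrow> y u \<le> c ^ u * y 0 + (\<Sum>v<u. c ^ (u - 1 - v) * (1 - c) * Ob v)"
proof (induction u)
  case 0 then show ?case by simp
next
  case (Suc u)
  then have "y (Suc u) \<le> c * y u + (1 - c) * Ob u" using assms by auto
  also have "\<dots> \<le> c * (c ^ u * y 0 + (\<Sum>v<u. c ^ (u - 1 - v) * (1 - c) * Ob v)) + (1 - c) * Ob u"
    using Suc assms(1) by (simp add: mult_left_mono)
  also have "\<dots> = c ^ Suc u * y 0 + (\<Sum>v<Suc u. c ^ (Suc u - 1 - v) * (1 - c) * Ob v)"
  proof -
    have "c * (\<Sum>v<u. c ^ (u - 1 - v) * (1 - c) * Ob v) = (\<Sum>v<u. c ^ (Suc u - 1 - v) * (1 - c) * Ob v)"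
      unfolding sum_distrib_left
    proof (rule sum.cong)
      fix v assume "v \<in> {..<u}"
      then have "Suc u - 1 - v = Suc (u - 1 - v)" by auto
      then show "c * (c ^ (u - 1 - v) * (1 - c) * Ob v) = c ^ (Suc u - 1 - v) * (1 - c) * Ob v" by simp
    qed simp
    then show ?thesis by (simp add: algebra_simps)
  qed
  finally show ?case .
qed

lemma block_rec:
  fixes x :: "nat \<Rightarrow> real"
  assumes "a \<ge> 0" "\<forall>r<R. x (s + Suc r) \<le> a * x (s + r) + (1 - a) * Ob"
  shows "r \<le> R \<Longrightarrow> x (s + r) - Ob \<le> a ^ r * (x s - Ob)"
proof (induction r)
  case 0 then show ?case by simp
next
  case (Suc r)
  then have "x (s + Suc r) - Ob \<le> a * (x (s + r) - Ob)" using assms by (auto simp: algebra_simps)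
  also have "\<dots> \<le> a * (a ^ r * (x s - Ob))" using Suc assms(1) by (simp add: mult_left_mono)
  finally show ?case by simp
qed

theorem theorem2:
  fixes nV K L :: nat
    and eps :: "nat \<Rightarrow> real"
    and Vs :: "nat \<Rightarrow> 'r set"
    and p :: "'r \<Rightarrow> nat \<Rightarrow> real"
    and jj :: "nat \<Rightarrow> 'r" and ll :: "nat \<Rightarrow> nat"
    and b :: "nat \<Rightarrow> nat \<Rightarrow> real" and A :: "nat \<Rightarrow> 'r set" and J :: "nat \<Rightarrow> nat \<Rightarrow> 'r set"
    and OPT :: "nat \<Rightarrow> real"
  assumes "nV > 0" and "K > 0" and "L > 0"
    and "\<forall>i<nV. 0 \<le> eps i \<and> eps i \<le> 1"
    and "\<forall>l<L. finite (Vs l) \<and> card (Vs l) \<ge> K"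
    and "\<forall>l<L. \<forall>l'<L. l \<noteq> l' \<longrightarrow> Vs l \<inter> Vs l' = {}"
    and "\<forall>j \<in> (\<Union>l<L. Vs l). \<forall>i<nV. 0 \<le> p j i \<and> p j i \<le> 1"
    and "greedy_run nV K L eps Vs p jj ll b A J"
    and "\<forall>u. Suc u < L \<longrightarrow> OPT u \<le> OPT (Suc u)"
    and "\<forall>t < L * K. \<exists>S. S \<subseteq> A t \<and> S \<noteq> {} \<and> card S \<le> L * K \<and>
           (\<Sum>i<nV. \<Prod>j\<in>S. p j i) \<le> OPT (t div K)"
  shows "(\<Sum>i<nV. b (L * K) i) \<le> (\<Sum>i<nV. eps i) / exp 1 + (\<Sum>u<L. gamma_coef L u * OPT u)"
  proof -
  note G = assms(8)[unfolded greedy_run_def]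
  define n where "n = L * K"
  define x where "x t = (\<Sum>i<nV. b t i)" for t
  have npos: "n > 0" using assms(2,3) by (simp add: n_def)
  have b0: "b 0 = eps" and A0: "A 0 = (\<Union>l<L. Vs l)" using G by auto
  have st: "\<And>t. t < n \<Longrightarrow> jj t \<in> A t \<and> (\<forall>j \<in> A t. (\<Sum>i<nV. b t i * p (jj t) i) \<le> (\<Sum>i<nV. b t i * p j i))
      \<and> b (Suc t) = (\<lambda>i. b t i * p (jj t) i) \<and> A (Suc t) \<subseteq> A t"
    using G unfolding n_def by (auto split: if_splits)
  have Asub: "t \<le> n \<Longrightarrow> A t \<subseteq> A 0" for t
  proof (induction t)
    case (Suc t)
    then have "t < n" by simp
    then show ?case using st[of t] Suc by auto
  qed simp
  have finA: "finite (A 0)" unfolding A0 using assms(5) by auto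
  have pj: "\<And>j i. j \<in> A 0 \<Longrightarrow> i < nV \<Longrightarrow> 0 \<le> p j i \<and> p j i \<le> 1" using assms(7) A0 by auto
  have bb: "t \<le> n \<Longrightarrow> \<forall>i<nV. 0 \<le> b t i \<and> b t i \<le> 1" for t
  proof (induction t)
    case 0 then show ?case using b0 assms(4) by simp
  next
    case (Suc t)
    then have t: "t < n" by simp
    have j: "jj t \<in> A 0" using st[OF t] Asub[of t] t by auto
    show ?case
    proof (intro allI impI)
      fix i assume i: "i < nV"
      have "0 \<le> b t i" "b t i \<le> 1" using Suc t i by auto
      moreover have "0 \<le> p (jj t) i" "p (jj t) i \<le> 1" using pj[OF j i] by auto
      ultimately show "0 \<le> b (Suc t) i \<and> b (Suc t) i \<le> 1"
        using st[OF t] by (simp add: mult_le_one)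
    qed
  qed
  define a where "a = exp (- 1 / real n)"
  have a0: "0 \<le> a" and a1: "a \<le> 1" using npos by (auto simp: a_def)
  have a2: "1 - 1 / real n \<le> a" unfolding a_def using exp_ge_add_one_self[of "- 1 / real n"] by simp
  have key: "x (Suc t) \<le> a * x t + (1 - a) * OPT (t div K)" if t: "t < n" for t
  proof -
    obtain S where S: "S \<subseteq> A t" "S \<noteq> {}" "card S \<le> L * K"
        "(\<Sum>i<nV. \<Prod>j\<in>S. p j i) \<le> OPT (t div K)"
      using assms(10) t n_def by blast
    have SA: "S \<subseteq> A 0" using S(1) Asub[of t] t by auto
    have finS: "finite S" using SA finA finite_subset by blast
    have m1: "1 \<le> real (card S)" using finS S(2) by (simp add: Suc_le_eq card_gt_0_iff)
    have mn: "real (card S) \<le> real n" using S(3) n_def of_nat_mono by (metis)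
    have bt: "\<forall>i<nV. 0 \<le> b t i \<and> b t i \<le> 1" using bb t by simp
    define g where "g = (\<Sum>i<nV. b t i * (\<Prod>j\<in>S. p j i))"
    define h where "h j = (\<Sum>i<nV. b t i * p j i)" for j
    have PU: "\<And>i. i < nV \<Longrightarrow> 0 \<le> (\<Prod>j\<in>S. p j i) \<and> (\<Prod>j\<in>S. p j i) \<le> 1 \<and>
        1 - (\<Prod>j\<in>S. p j i) \<le> (\<Sum>j\<in>S. 1 - p j i)"
    proof -
      fix i assume i: "i < nV"
      have "\<forall>j\<in>S. 0 \<le> p j i \<and> p j i \<le> 1" using pj SA i by auto
      from prod_union_bound[OF finS this] show "?thesis i" .
    qed
    have gO: "g \<le> OPT (t div K)"
    proof -
      have "g \<le> (\<Sum>i<nV. \<Prod>j\<in>S. p j i)" unfolding g_def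
        by (rule sum_mono) (use bt PU in \<open>auto intro: mult_left_le_one_le\<close>)
      then show ?thesis using S(4) by simp
    qed
    have xs: "x (Suc t) = h (jj t)" using st[OF t] by (simp add: x_def h_def)
    have jA: "jj t \<in> A 0" using st[OF t] Asub[of t] t by auto
    have hf: "h (jj t) \<le> x t" unfolding h_def x_def
      by (rule sum_mono) (use bt pj[OF jA] in \<open>auto intro: mult_left_le\<close>)
    have "x t - g = (\<Sum>i<nV. b t i * (1 - (\<Prod>j\<in>S. p j i)))"
      by (simp add: x_def g_def algebra_simps sum_subtractf)
    also have "\<dots> \<le> (\<Sum>i<nV. b t i * (\<Sum>j\<in>S. 1 - p j i))"
      by (rule sum_mono) (use bt PU in \<open>auto intro: mult_left_mono\<close>)
    also have "\<dots> = (\<Sum>j\<in>S. x t - h j)"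
      by (simp add: x_def h_def sum_distrib_left algebra_simps sum_subtractf sum.swap[of _ S])
    also have "\<dots> \<le> (\<Sum>j\<in>S. x t - h (jj t))"
      by (rule sum_mono) (use st[OF t] S(1) h_def in auto)
    also have "\<dots> = real (card S) * (x t - h (jj t))" by simp
    finally have "x t - g \<le> real (card S) * (x t - h (jj t))" .
    from step_core[OF m1 mn this gO hf a2 a1] show ?thesis using xs by simp
  qed
  define c where "c = a ^ K"
  have c0: "0 \<le> c" using a0 by (simp add: c_def)
  have blk: "\<forall>u<L. x (Suc u * K) \<le> c * x (u * K) + (1 - c) * OPT u"
  proof (intro allI impI)
    fix u assume u: "u < L"
    have "\<forall>r<K. x (u * K + Suc r) \<le> a * x (u * K + r) + (1 - a) * OPT u"
    proof (intro allI impI)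
      fix r assume r: "r < K"
      have "u * K + r < n"
      proof -
        have "u * K + r < u * K + K" using r by simp
        also have "\<dots> = Suc u * K" by simp
        also have "\<dots> \<le> L * K" using u by (intro mult_right_mono) auto
        finally show ?thesis by (simp add: n_def)
      qed
      moreover have "(u * K + r) div K = u" using r by simp
      ultimately show "x (u * K + Suc r) \<le> a * x (u * K + r) + (1 - a) * OPT u"
        using key[of "u * K + r"] by simp
    qed
    from block_rec[OF a0 this, of K] have "x (u * K + K) - OPT u \<le> c * (x (u * K) - OPT u)"
      by (simp add: c_def)
    then show "x (Suc u * K) \<le> c * x (u * K) + (1 - c) * OPT u"
      by (simp add: algebra_simps add.commute)
  qed
  have fin: "x (L * K) \<le> c ^ L * x 0 + (\<Sum>v<L. c ^ (L - 1 - v) * (1 - c) * OPT v)"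
    using geom_rec[of c L "\<lambda>u. x (u * K)" OPT L] c0 blk by simp
  have cexp: "c = exp (- 1 / real L)"
  proof -
    have "c = exp (real K * (- 1 / real n))" unfolding c_def a_def by (rule exp_of_nat_mult[symmetric])
    also have "real K * (- 1 / real n) = - 1 / real L" using assms(2) by (simp add: n_def)
    finally show ?thesis .
  qed
  have cL: "c ^ L = exp (-1)"
  proof -
    have "c ^ L = exp (real L * (- 1 / real L))" unfolding cexp by (rule exp_of_nat_mult[symmetric])
    also have "real L * (- 1 / real L) = -1" using assms(3) by simp
    finally show ?thesis .
  qed
  have "(\<Sum>v<L. c ^ (L - 1 - v) * (1 - c) * OPT v) = (\<Sum>u<L. gamma_coef L u * OPT u)"
    by (simp add: gamma_coef_def cexp mult.commute mult.left_commute)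
  moreover have "x 0 = (\<Sum>i<nV. eps i)" using b0 by (simp add: x_def)
  ultimately show ?thesis using fin cL by (simp add: x_def exp_minus field_simps)
qed

end
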